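(* Let $X$ and $Y$ be Hausdorff spaces with $X$ locally compact, and let $f:\mathrm{Closed}(X)\to\mathrm{Closed}(Y)$ be admissible. Then $X+_fY$ is Hausdorff if and only if $f(K)=\emptyset$ for every compact $K\subseteq X$ and, for all distinct $a,b\in Y$, there exist $A,B\in\mathrm{Closed}(X)$ with $A\cup B=X$, $b\notin f(A)$ and $a\notin f(B)$.
   Context: $\mathrm{Closed}(X)$ is the set of closed subsets of $X$. $f:\mathrm{Closed}(X)\to\mathrm{Closed}(Y)$ is admissible if $f(\emptyset)=\emptyset$ and $f(A_1\cup A_2)=f(A_1)\cup f(A_2)$. $X+_fY$ is the set $X\sqcup Y$ with the topology whose closed sets are the $D$ with $D\cap X$ closed in $X$, $D\cap Y$ closed in $Y$ and $f(D\cap X)\subseteq D$. *)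

theory Defs
  imports "HOL-Analysis.Analysis"
begin

text \<open>Admissible maps Closed(X) \<rightarrow> Closed(Y), represented as set functions whose
  behaviour is only constrained on closed subsets of X.\<close>
definition admissible :: "'a topology \<Rightarrow> 'b topology \<Rightarrow> ('a set \<Rightarrow> 'b set) \<Rightarrow> bool" where
  "admissible X Y f \<longleftrightarrow>
     (\<forall>C. closedin X C \<longrightarrow> closedin Y (f C)) \<and>
     f {} = {} \<and>
     (\<forall>A1 A2. closedin X A1 \<and> closedin X A2 \<longrightarrow> f (A1 \<union> A2) = f A1 \<union> f A2)"

definition glue_carrier :: "'a topology \<Rightarrow> 'b topology \<Rightarrow> ('a + 'b) set" where
  "glue_carrier X Y = Inl ` topspace X \<union> Inr ` topspace Y"

definition glue_closed :: "'a topology \<Rightarrow> 'b topology \<Rightarrow> ('a set \<Rightarrow> 'b set) \<Rightarrow> ('a + 'b) set \<Rightarrow> bool" where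
  "glue_closed X Y f D \<longleftrightarrow>
     D \<subseteq> glue_carrier X Y \<and>
     closedin X {x. Inl x \<in> D} \<and>
     closedin Y {y. Inr y \<in> D} \<and>
     Inr ` f {x. Inl x \<in> D} \<subseteq> D"

definition glue_top :: "'a topology \<Rightarrow> 'b topology \<Rightarrow> ('a set \<Rightarrow> 'b set) \<Rightarrow> ('a + 'b) topology" where
  "glue_top X Y f = topology (\<lambda>U. U \<subseteq> glue_carrier X Y \<and> glue_closed X Y f (glue_carrier X Y - U))"

end

theory Submission
  imports Defs
begin

definition gopen :: "'a topology \<Rightarrow> 'b topology \<Rightarrow> ('a set \<Rightarrow> 'b set) \<Rightarrow> ('a + 'b) set \<Rightarrow> bool" where
  "gopen X Y f U \<longleftrightarrow> U \<subseteq> glue_carrier X Y \<and> openin X {x. Inl x \<in> U} \<and> openin Y {y. Inr y \<in> U}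
     \<and> (\<forall>y. Inr y \<in> U \<longrightarrow> y \<notin> f (topspace X - {x. Inl x \<in> U}))"

lemma adm_mono:
  assumes "admissible X Y f" "closedin X A" "closedin X B" "A \<subseteq> B"
  shows "f A \<subseteq> f B"
proof -
  have "f B = f (A \<union> B)" using assms(4) by (simp add: Un_absorb1)
  also have "\<dots> = f A \<union> f B" using assms unfolding admissible_def by blast
  finally show ?thesis by blast
qed

lemma gopen_eq:
  assumes "admissible X Y f"
  shows "(\<lambda>U. U \<subseteq> glue_carrier X Y \<and> glue_closed X Y f (glue_carrier X Y - U)) = gopen X Y f"
proof (rule ext)
  fix U
  show "(U \<subseteq> glue_carrier X Y \<and> glue_closed X Y f (glue_carrier X Y - U)) = gopen X Y f U"
  proof (cases "U \<subseteq> glue_carrier X Y")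
    case True
    have e1: "{x. Inl x \<in> glue_carrier X Y - U} = topspace X - {x. Inl x \<in> U}"
      by (auto simp: glue_carrier_def)
    have e2: "{y. Inr y \<in> glue_carrier X Y - U} = topspace Y - {y. Inr y \<in> U}"
      by (auto simp: glue_carrier_def)
    have s1: "{x. Inl x \<in> U} \<subseteq> topspace X" using True by (auto simp: glue_carrier_def)
    have s2: "{y. Inr y \<in> U} \<subseteq> topspace Y" using True by (auto simp: glue_carrier_def)
    have c1: "closedin X (topspace X - {x. Inl x \<in> U}) \<longleftrightarrow> openin X {x. Inl x \<in> U}"
      using s1 by (metis closedin_def double_diff openin_closedin_eq subset_refl Diff_subset)
    have c2: "closedin Y (topspace Y - {y. Inr y \<in> U}) \<longleftrightarrow> openin Y {y. Inr y \<in> U}"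
      using s2 by (metis closedin_def double_diff openin_closedin_eq subset_refl Diff_subset)
    have fsub: "closedin X (topspace X - {x. Inl x \<in> U}) \<Longrightarrow> f (topspace X - {x. Inl x \<in> U}) \<subseteq> topspace Y"
      using assms closedin_subset unfolding admissible_def by blast
    have im: "\<And>S. Inr ` S \<subseteq> glue_carrier X Y - U \<longleftrightarrow> S \<subseteq> topspace Y \<and> (\<forall>y\<in>S. Inr y \<notin> U)"
      by (auto simp: glue_carrier_def)
    show ?thesis
      unfolding glue_closed_def gopen_def e1 e2 c1 c2 im
      using True fsub c1 by auto
  next
    case False
    then show ?thesis by (simp add: gopen_def)
  qed
qed

lemma gopen_istopology:
  assumes "admissible X Y f"
  shows "istopology (gopen X Y f)"
  unfolding istopology_def
proof (intro conjI allI impI ballI)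
  fix S T assume S: "gopen X Y f S" and T: "gopen X Y f T"
  have "topspace X - {x. Inl x \<in> S \<inter> T} = (topspace X - {x. Inl x \<in> S}) \<union> (topspace X - {x. Inl x \<in> T})"
    by auto
  moreover have "closedin X (topspace X - {x. Inl x \<in> S})" "closedin X (topspace X - {x. Inl x \<in> T})"
    using S T by (auto simp: gopen_def)
  ultimately have "f (topspace X - {x. Inl x \<in> S \<inter> T}) = f (topspace X - {x. Inl x \<in> S}) \<union> f (topspace X - {x. Inl x \<in> T})"
    using assms unfolding admissible_def by simp
  moreover have "{x. Inl x \<in> S \<inter> T} = {x. Inl x \<in> S} \<inter> {x. Inl x \<in> T}" "{x. Inr x \<in> S \<inter> T} = {x. Inr x \<in> S} \<inter> {x. Inr x \<in> T}"
    by auto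
  ultimately show "gopen X Y f (S \<inter> T)" using S T unfolding gopen_def by auto
next
  fix K assume K: "\<forall>S\<in>K. gopen X Y f S"
  have e1: "{x. Inl x \<in> \<Union>K} = (\<Union>S\<in>K. {x. Inl x \<in> S})" "{x. Inr x \<in> \<Union>K} = (\<Union>S\<in>K. {x. Inr x \<in> S})"
    by auto
  have o1: "openin X {x. Inl x \<in> \<Union>K}" unfolding e1 using K by (auto simp: gopen_def)
  have o2: "openin Y {x. Inr x \<in> \<Union>K}" unfolding e1 using K by (auto simp: gopen_def)
  have "y \<notin> f (topspace X - {x. Inl x \<in> \<Union>K})" if yK: "Inr y \<in> \<Union>K" for y
  proof -
    obtain S where S: "S \<in> K" "Inr y \<in> S" using yK by auto
    have g: "gopen X Y f S" using K S by auto
    have "f (topspace X - {x. Inl x \<in> \<Union>K}) \<subseteq> f (topspace X - {x. Inl x \<in> S})"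
      apply (rule adm_mono[OF assms])
      using o1 g by (auto simp: gopen_def S)
    then show ?thesis using g S by (auto simp: gopen_def)
  qed
  then show "gopen X Y f (\<Union>K)" using o1 o2 K unfolding gopen_def by auto
qed

lemma openin_glue:
  assumes "admissible X Y f"
  shows "openin (glue_top X Y f) U \<longleftrightarrow> gopen X Y f U"
  unfolding glue_top_def gopen_eq[OF assms] using gopen_istopology[OF assms] by simp

lemma topspace_glue:
  assumes "admissible X Y f"
  shows "topspace (glue_top X Y f) = glue_carrier X Y"
proof -
  have "{x. Inl x \<in> glue_carrier X Y} = topspace X" "{x. Inr x \<in> glue_carrier X Y} = topspace Y"
    by (auto simp: glue_carrier_def)
  then have "gopen X Y f (glue_carrier X Y)"
    using assms by (auto simp: gopen_def admissible_def)
  moreover have "\<And>U. gopen X Y f U \<Longrightarrow> U \<subseteq> glue_carrier X Y" by (simp add: gopen_def)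
  ultimately show ?thesis unfolding topspace_def openin_glue[OF assms] by blast
qed

lemma gopen_sum:
  "gopen X Y f (Inl ` P \<union> Inr ` Q) \<longleftrightarrow> openin X P \<and> openin Y Q \<and> (\<forall>y\<in>Q. y \<notin> f (topspace X - P))"
proof -
  have e: "{x. Inl x \<in> Inl ` P \<union> Inr ` Q} = P" "{y. Inr y \<in> Inl ` P \<union> Inr ` Q} = Q" by auto
  have "openin X P \<Longrightarrow> P \<subseteq> topspace X" "openin Y Q \<Longrightarrow> Q \<subseteq> topspace Y"
    by (auto dest: openin_subset)
  then show ?thesis unfolding gopen_def e
    by (auto simp: glue_carrier_def; blast)
qed

lemma gopen_Inl: "openin X P \<Longrightarrow> gopen X Y f (Inl ` P)"
  using gopen_sum[of X Y f P "{}"] by simp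

lemma sep_mixed:
  assumes "Hausdorff_space X" "locally_compact_space X" "admissible X Y f"
    and K0: "\<forall>K. compactin X K \<longrightarrow> f K = {}"
    and x: "x \<in> topspace X" and y: "y \<in> topspace Y"
  shows "\<exists>W1 W2. openin (glue_top X Y f) W1 \<and> openin (glue_top X Y f) W2 \<and> Inl x \<in> W1 \<and> Inr y \<in> W2 \<and> disjnt W1 W2"
proof -
  obtain U K where UK: "openin X U" "compactin X K" "x \<in> U" "U \<subseteq> K"
    using assms(2) x unfolding locally_compact_space_def by blast
  have Kc: "closedin X K" using UK(2) assms(1) by (simp add: compactin_imp_closedin)
  have Ks: "K \<subseteq> topspace X" using Kc closedin_subset by blast
  have "topspace X - (topspace X - K) = K" using Ks by blast
  then have g2: "gopen X Y f (Inl ` (topspace X - K) \<union> Inr ` topspace Y)"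
    unfolding gopen_sum using Kc K0 UK(2) by auto
  have g1: "gopen X Y f (Inl ` U)" using gopen_Inl UK(1) by blast
  show ?thesis
    apply (rule exI[of _ "Inl ` U"], rule exI[of _ "Inl ` (topspace X - K) \<union> Inr ` topspace Y"])
    using g1 g2 openin_glue[OF assms(3)] UK y by (auto simp: disjnt_def)
qed

theorem mainTheorem11:
  fixes X :: "'a topology" and Y :: "'b topology" and f :: "'a set \<Rightarrow> 'b set"
  assumes "Hausdorff_space X" and "Hausdorff_space Y"
    and "locally_compact_space X"
    and "admissible X Y f"
  shows "Hausdorff_space (glue_top X Y f) \<longleftrightarrow>
           ((\<forall>K. compactin X K \<longrightarrow> f K = {}) \<and>
            (\<forall>a\<in>topspace Y. \<forall>b\<in>topspace Y. a \<noteq> b \<longrightarrow>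
               (\<exists>A B. closedin X A \<and> closedin X B \<and> A \<union> B = topspace X \<and>
                      b \<notin> f A \<and> a \<notin> f B)))"
proof
  assume H: "Hausdorff_space (glue_top X Y f)"
  note op = openin_glue[OF assms(4)]
  note ts = topspace_glue[OF assms(4)]
  have clV: "closedin X (topspace X - {x. Inl x \<in> V})" if "openin (glue_top X Y f) V" for V
    using that unfolding op gopen_def by auto
  have nf: "y \<notin> f (topspace X - {x. Inl x \<in> V})" if "openin (glue_top X Y f) V" "Inr y \<in> V" for V y
    using that unfolding op gopen_def by auto
  have P1: "f K = {}" if K: "compactin X K" for K
  proof (rule ccontr)
    assume "f K \<noteq> {}"
    then obtain y where yK: "y \<in> f K" by blast
    have Kc: "closedin X K" using K assms(1) by (simp add: compactin_imp_closedin)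
    have "closedin Y (f K)" using Kc assms(4) unfolding admissible_def by blast
    then have yY: "y \<in> topspace Y" using yK closedin_subset by blast
    have cm: "continuous_map X (glue_top X Y f) Inl"
      unfolding continuous_map_def
    proof (intro conjI allI impI)
      show "Inl \<in> topspace X \<rightarrow> topspace (glue_top X Y f)" using ts by (auto simp: glue_carrier_def)
    next
      fix U assume "openin (glue_top X Y f) U"
      then have "openin X {x. Inl x \<in> U}" unfolding op gopen_def by auto
      moreover have "{x \<in> topspace X. Inl x \<in> U} = {x. Inl x \<in> U}"
        using openin_subset[OF calculation] by auto
      ultimately show "openin X {x \<in> topspace X. Inl x \<in> U}" by simp
    qed
    have c1: "compactin (glue_top X Y f) (Inl ` K)" using image_compactin[OF K cm] .
    have c2: "compactin (glue_top X Y f) {Inr y}" unfolding compactin_sing ts glue_carrier_def using yY by blast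
    have dj: "disjnt (Inl ` K) {Inr y}" by (auto simp: disjnt_def)
    obtain U V where UV: "openin (glue_top X Y f) U" "openin (glue_top X Y f) V"
      "Inl ` K \<subseteq> U" "{Inr y} \<subseteq> V" "disjnt U V"
      using Hausdorff_space_compact_separation[OF H c1 c2 dj] by blast
    have "K \<subseteq> topspace X - {x. Inl x \<in> V}"
      using UV(3,5) Kc closedin_subset unfolding disjnt_def by blast
    then have "f K \<subseteq> f (topspace X - {x. Inl x \<in> V})"
      using adm_mono[OF assms(4) Kc clV[OF UV(2)]] by blast
    then show False using nf[OF UV(2)] UV(4) yK by blast
  qed
  have P2: "\<exists>A B. closedin X A \<and> closedin X B \<and> A \<union> B = topspace X \<and> b \<notin> f A \<and> a \<notin> f B"
    if ab: "a \<in> topspace Y" "b \<in> topspace Y" "a \<noteq> b" for a b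
  proof -
    have "Inr a \<in> topspace (glue_top X Y f)" "Inr b \<in> topspace (glue_top X Y f)"
      using ab ts by (auto simp: glue_carrier_def)
    then obtain U V where UV: "openin (glue_top X Y f) U" "openin (glue_top X Y f) V"
      "Inr a \<in> U" "Inr b \<in> V" "disjnt U V"
      using H ab(3) unfolding Hausdorff_space_def by blast
    show ?thesis
      apply (rule exI[of _ "topspace X - {x. Inl x \<in> V}"], rule exI[of _ "topspace X - {x. Inl x \<in> U}"])
      using clV[OF UV(1)] clV[OF UV(2)] nf[OF UV(1,3)] nf[OF UV(2,4)] UV(5)
      by (auto simp: disjnt_def)
  qed
  show "(\<forall>K. compactin X K \<longrightarrow> f K = {}) \<and>
            (\<forall>a\<in>topspace Y. \<forall>b\<in>topspace Y. a \<noteq> b \<longrightarrow>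
               (\<exists>A B. closedin X A \<and> closedin X B \<and> A \<union> B = topspace X \<and>
                      b \<notin> f A \<and> a \<notin> f B))"
    using P1 P2 by blast
next
  assume R: "(\<forall>K. compactin X K \<longrightarrow> f K = {}) \<and>
            (\<forall>a\<in>topspace Y. \<forall>b\<in>topspace Y. a \<noteq> b \<longrightarrow>
               (\<exists>A B. closedin X A \<and> closedin X B \<and> A \<union> B = topspace X \<and>
                      b \<notin> f A \<and> a \<notin> f B))"
  note op = openin_glue[OF assms(4)]
  note ts = topspace_glue[OF assms(4)]
  show "Hausdorff_space (glue_top X Y f)"
    unfolding Hausdorff_space_def
  proof (intro allI impI)
    fix p q assume pq: "p \<in> topspace (glue_top X Y f) \<and> q \<in> topspace (glue_top X Y f) \<and> p \<noteq> q"
    show "\<exists>U V. openin (glue_top X Y f) U \<and> openin (glue_top X Y f) V \<and> p \<in> U \<and> q \<in> V \<and> disjnt U V"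
    proof (cases p; cases q)
      fix x1 x2 assume e: "p = Inl x1" "q = Inl x2"
      then have "x1 \<in> topspace X" "x2 \<in> topspace X" "x1 \<noteq> x2" using pq ts by (auto simp: glue_carrier_def)
      then obtain U1 U2 where U: "openin X U1" "openin X U2" "x1 \<in> U1" "x2 \<in> U2" "disjnt U1 U2"
        using assms(1) unfolding Hausdorff_space_def by blast
      show ?thesis
        apply (rule exI[of _ "Inl ` U1"], rule exI[of _ "Inl ` U2"])
        using U gopen_Inl op e by (auto simp: disjnt_def)
    next
      fix x y assume e: "p = Inl x" "q = Inr y"
      then have x: "x \<in> topspace X" and y: "y \<in> topspace Y" using pq ts by (auto simp: glue_carrier_def)
      obtain W1 W2 where W: "openin (glue_top X Y f) W1" "openin (glue_top X Y f) W2" "Inl x \<in> W1" "Inr y \<in> W2" "disjnt W1 W2"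
        using sep_mixed[OF assms(1,3,4) R[THEN conjunct1] x y] by blast
      show ?thesis unfolding e using W by blast
    next
      fix y x assume e: "p = Inr y" "q = Inl x"
      then have x: "x \<in> topspace X" and y: "y \<in> topspace Y" using pq ts by (auto simp: glue_carrier_def)
      obtain W1 W2 where W: "openin (glue_top X Y f) W1" "openin (glue_top X Y f) W2" "Inl x \<in> W1" "Inr y \<in> W2" "disjnt W1 W2"
        using sep_mixed[OF assms(1,3,4) R[THEN conjunct1] x y] by blast
      have "disjnt W2 W1" using W(5) by (simp add: disjnt_sym)
      then show ?thesis unfolding e using W by blast
    next
      fix y1 y2 assume e: "p = Inr y1" "q = Inr y2"
      then have yy: "y1 \<in> topspace Y" "y2 \<in> topspace Y" "y1 \<noteq> y2" using pq ts by (auto simp: glue_carrier_def)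
      then obtain A B where AB: "closedin X A" "closedin X B" "A \<union> B = topspace X" "y2 \<notin> f A" "y1 \<notin> f B"
        using R by blast
      obtain U1 U2 where U: "openin Y U1" "openin Y U2" "y1 \<in> U1" "y2 \<in> U2" "disjnt U1 U2"
        using assms(2) yy unfolding Hausdorff_space_def by blast
      have cB: "closedin Y (f B)" "closedin Y (f A)" using AB assms(4) unfolding admissible_def by blast+
      have sA: "topspace X - (topspace X - A) = A" "topspace X - (topspace X - B) = B"
        using AB closedin_subset by blast+
      have g1: "gopen X Y f (Inl ` (topspace X - B) \<union> Inr ` (U1 - f B))"
        unfolding gopen_sum sA using AB cB U by (auto intro: openin_diff)
      have g2: "gopen X Y f (Inl ` (topspace X - A) \<union> Inr ` (U2 - f A))"
        unfolding gopen_sum sA using AB cB U by (auto intro: openin_diff)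
      show ?thesis
        apply (rule exI[of _ "Inl ` (topspace X - B) \<union> Inr ` (U1 - f B)"],
               rule exI[of _ "Inl ` (topspace X - A) \<union> Inr ` (U2 - f A)"])
        using g1 g2 op e U AB by (auto simp: disjnt_def)
    qed
  qed
qed

end
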